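(* Let $\mathcal{A}$ be a Desargues affine plane, let $O\neq I$ be points, and let $\delta$ be a dilatation of $\mathcal{A}$. Equip $\ell^{OI}$ with the skew field structure with zero $O$ and unit $I$, and the line $\delta(\ell^{OI})$ with the skew field structure with zero $\delta(O)$ and unit $\delta(I)$. Then for all $A,B,C\in\ell^{OI}$ with $B\neq C$, \[ \delta(r(A,B;C))=r(\delta(A),\delta(B);\delta(C)), \] where the ratio on the left is computed in $\ell^{OI}$ and the ratio on the right in $\delta(\ell^{OI})$.
   Context: A Desargues affine plane is an incidence structure of points and lines in which any two distinct points lie on exactly one line, through a point not on a line $\ell$ there is exactly one line disjoint from $\ell$ (Playfair), there exist three non-collinear points, and Desargues' axiom holds: if $A,B,C,A',B',C'$ are points such that the pairwise distinct lines $AA',BB',CC'$ are either all parallel or all pass through one point, and $AB\parallel A'B'$, $BC\parallel B'C'$ (with $AB\neq A'B'$, $BC\neq B'C'$, $A\ne C$, $A'\ne C'$), then $AC\parallel A'C'$. Skew field on a line: for distinct points $O,I$ and points $A,B$ on the line $\ell^{OI}$, addition is defined by: choose a point $B_1\notin\ell^{OI}$; let $P_1$ be the intersection of the line through $B_1$ parallel to $\ell^{OI}$ with the line through $A$ parallel to $OB_1$; then $A+B$ is the intersection of $\ell^{OI}$ with the line through $P_1$ parallel to $BB_1$. Multiplication is defined by: choose $B_1\notin\ell^{OI}$; let $P_1$ be the intersection of the line through $A$ parallel to $IB_1$ with the line $OB_1$; then $A\cdot B$ is the intersection of $\ell^{OI}$ with the line through $P_1$ parallel to $BB_1$. These operations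 do not depend on the choice of $B_1$ and make $(\ell^{OI},+,\cdot)$ a skew field with zero $O$ and unit $I$; the same construction applies to any line with any chosen pair of distinct points as zero and unit. $-X$ and $X^{-1}$ denote additive and multiplicative inverses, $X-Y=X+(-Y)$. Ratio of three points on such a line: $r(A,B;C)=(B-C)^{-1}(A-C)$ for $B\neq C$. A dilatation of $\mathcal{A}$ is a collineation $\delta$ such that $\delta(P)\delta(Q)\parallel PQ$ for all points $P\neq Q$. *)

theory Defs
  imports Main
begin

text \<open>An incidence structure: the points are all elements of the type 'p,
  the lines are given by a set Ls of point sets.\<close>

definition line_of :: "'p set set \<Rightarrow> 'p \<Rightarrow> 'p \<Rightarrow> 'p set" where
  "line_of Ls P Q = (THE l. l \<in> Ls \<and> P \<in> l \<and> Q \<in> l)"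

definition parallel :: "'p set set \<Rightarrow> 'p set \<Rightarrow> 'p set \<Rightarrow> bool" where
  "parallel Ls l m \<longleftrightarrow> l \<in> Ls \<and> m \<in> Ls \<and> (l = m \<or> l \<inter> m = {})"

definition collinear :: "'p set set \<Rightarrow> 'p \<Rightarrow> 'p \<Rightarrow> 'p \<Rightarrow> bool" where
  "collinear Ls P Q R \<longleftrightarrow> (\<exists>l\<in>Ls. P \<in> l \<and> Q \<in> l \<and> R \<in> l)"

definition affine_plane :: "'p set set \<Rightarrow> bool" where
  "affine_plane Ls \<longleftrightarrow>
     (\<forall>l\<in>Ls. \<exists>P Q. P \<noteq> Q \<and> P \<in> l \<and> Q \<in> l) \<and>
     (\<forall>P Q. P \<noteq> Q \<longrightarrow> (\<exists>!l. l \<in> Ls \<and> P \<in> l \<and> Q \<in> l)) \<and>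
     (\<forall>P l. l \<in> Ls \<and> P \<notin> l \<longrightarrow> (\<exists>!m. m \<in> Ls \<and> P \<in> m \<and> m \<inter> l = {})) \<and>
     (\<exists>P Q R. \<not> collinear Ls P Q R)"

definition desargues_axiom :: "'p set set \<Rightarrow> bool" where
  "desargues_axiom Ls \<longleftrightarrow>
     (\<forall>A B C A' B' C'.
        A \<noteq> A' \<and> B \<noteq> B' \<and> C \<noteq> C' \<and> A \<noteq> B \<and> B \<noteq> C \<and> A' \<noteq> B' \<and> B' \<noteq> C' \<and>
        A \<noteq> C \<and> A' \<noteq> C' \<and>
        line_of Ls A A' \<noteq> line_of Ls B B' \<and> line_of Ls B B' \<noteq> line_of Ls C C' \<and>
        line_of Ls A A' \<noteq> line_of Ls C C' \<and>
        ((parallel Ls (line_of Ls A A') (line_of Ls B B') \<and>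
          parallel Ls (line_of Ls B B') (line_of Ls C C') \<and>
          parallel Ls (line_of Ls A A') (line_of Ls C C')) \<or>
         (\<exists>S. S \<in> line_of Ls A A' \<and> S \<in> line_of Ls B B' \<and> S \<in> line_of Ls C C')) \<and>
        parallel Ls (line_of Ls A B) (line_of Ls A' B') \<and>
        parallel Ls (line_of Ls B C) (line_of Ls B' C') \<and>
        line_of Ls A B \<noteq> line_of Ls A' B' \<and> line_of Ls B C \<noteq> line_of Ls B' C'
        \<longrightarrow> parallel Ls (line_of Ls A C) (line_of Ls A' C'))"

definition desargues_affine_plane :: "'p set set \<Rightarrow> bool" where
  "desargues_affine_plane Ls \<longleftrightarrow> affine_plane Ls \<and> desargues_axiom Ls"

definition par_through :: "'p set set \<Rightarrow> 'p \<Rightarrow> 'p set \<Rightarrow> 'p set" where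
  "par_through Ls P l = (THE m. m \<in> Ls \<and> P \<in> m \<and> parallel Ls m l)"

definition meet :: "'p set \<Rightarrow> 'p set \<Rightarrow> 'p" where
  "meet l m = (THE X. X \<in> l \<and> X \<in> m)"

text \<open>Skew field operations on the line through Oz and Iu (zero Oz, unit Iu).
  The auxiliary point B1 is an (arbitrary) chosen point off the line; the
  operations do not depend on this choice.\<close>
definition aux_pt :: "'p set set \<Rightarrow> 'p \<Rightarrow> 'p \<Rightarrow> 'p" where
  "aux_pt Ls Oz Iu = (SOME B1. B1 \<notin> line_of Ls Oz Iu)"

definition sf_add :: "'p set set \<Rightarrow> 'p \<Rightarrow> 'p \<Rightarrow> 'p \<Rightarrow> 'p \<Rightarrow> 'p" where
  "sf_add Ls Oz Iu A B =
    (let l = line_of Ls Oz Iu; B1 = aux_pt Ls Oz Iu;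
         P1 = meet (par_through Ls B1 l) (par_through Ls A (line_of Ls Oz B1))
     in meet l (par_through Ls P1 (line_of Ls B B1)))"

definition sf_mul :: "'p set set \<Rightarrow> 'p \<Rightarrow> 'p \<Rightarrow> 'p \<Rightarrow> 'p \<Rightarrow> 'p" where
  "sf_mul Ls Oz Iu A B =
    (let l = line_of Ls Oz Iu; B1 = aux_pt Ls Oz Iu;
         P1 = meet (par_through Ls A (line_of Ls Iu B1)) (line_of Ls Oz B1)
     in meet l (par_through Ls P1 (line_of Ls B B1)))"

definition sf_neg :: "'p set set \<Rightarrow> 'p \<Rightarrow> 'p \<Rightarrow> 'p \<Rightarrow> 'p" where
  "sf_neg Ls Oz Iu X = (THE Y. Y \<in> line_of Ls Oz Iu \<and> sf_add Ls Oz Iu X Y = Oz)"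

definition sf_inv :: "'p set set \<Rightarrow> 'p \<Rightarrow> 'p \<Rightarrow> 'p \<Rightarrow> 'p" where
  "sf_inv Ls Oz Iu X = (THE Y. Y \<in> line_of Ls Oz Iu \<and> sf_mul Ls Oz Iu X Y = Iu)"

definition sf_sub :: "'p set set \<Rightarrow> 'p \<Rightarrow> 'p \<Rightarrow> 'p \<Rightarrow> 'p \<Rightarrow> 'p" where
  "sf_sub Ls Oz Iu X Y = sf_add Ls Oz Iu X (sf_neg Ls Oz Iu Y)"

definition ratio :: "'p set set \<Rightarrow> 'p \<Rightarrow> 'p \<Rightarrow> 'p \<Rightarrow> 'p \<Rightarrow> 'p \<Rightarrow> 'p" where
  "ratio Ls Oz Iu A B C =
     sf_mul Ls Oz Iu (sf_inv Ls Oz Iu (sf_sub Ls Oz Iu B C)) (sf_sub Ls Oz Iu A C)"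

definition collineation :: "'p set set \<Rightarrow> ('p \<Rightarrow> 'p) \<Rightarrow> bool" where
  "collineation Ls f \<longleftrightarrow> bij f \<and> (\<forall>l. l \<in> Ls \<longleftrightarrow> f ` l \<in> Ls)"

definition dilatation :: "'p set set \<Rightarrow> ('p \<Rightarrow> 'p) \<Rightarrow> bool" where
  "dilatation Ls f \<longleftrightarrow> collineation Ls f \<and>
     (\<forall>P Q. P \<noteq> Q \<longrightarrow> parallel Ls (line_of Ls (f P) (f Q)) (line_of Ls P Q))"

end

theory Submission
  imports Defs
begin

definition addP :: "'p set set \<Rightarrow> 'p \<Rightarrow> 'p \<Rightarrow> 'p \<Rightarrow> 'p \<Rightarrow> 'p" where
  "addP Ls Oz Iu B1 A = meet (par_through Ls B1 (line_of Ls Oz Iu)) (par_through Ls A (line_of Ls Oz B1))"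
definition mulP :: "'p set set \<Rightarrow> 'p \<Rightarrow> 'p \<Rightarrow> 'p \<Rightarrow> 'p \<Rightarrow> 'p" where
  "mulP Ls Oz Iu B1 A = meet (par_through Ls A (line_of Ls Iu B1)) (line_of Ls Oz B1)"
definition fin :: "'p set set \<Rightarrow> 'p set \<Rightarrow> 'p \<Rightarrow> 'p \<Rightarrow> 'p \<Rightarrow> 'p" where
  "fin Ls l P B1 B = meet l (par_through Ls P (line_of Ls B B1))"
definition addg :: "'p set set \<Rightarrow> 'p \<Rightarrow> 'p \<Rightarrow> 'p \<Rightarrow> 'p \<Rightarrow> 'p \<Rightarrow> 'p" where
  "addg Ls Oz Iu B1 A B = fin Ls (line_of Ls Oz Iu) (addP Ls Oz Iu B1 A) B1 B"
definition mulg :: "'p set set \<Rightarrow> 'p \<Rightarrow> 'p \<Rightarrow> 'p \<Rightarrow> 'p \<Rightarrow> 'p \<Rightarrow> 'p" where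
  "mulg Ls Oz Iu B1 A B = fin Ls (line_of Ls Oz Iu) (mulP Ls Oz Iu B1 A) B1 B"

lemma sf_add_g: "sf_add Ls Oz Iu A B = addg Ls Oz Iu (aux_pt Ls Oz Iu) A B"
  unfolding sf_add_def addg_def fin_def addP_def Let_def ..
lemma sf_mul_g: "sf_mul Ls Oz Iu A B = mulg Ls Oz Iu (aux_pt Ls Oz Iu) A B"
  unfolding sf_mul_def mulg_def fin_def mulP_def Let_def ..

locale dap =
  fixes Ls :: "'p set set"
  assumes dap: "desargues_affine_plane Ls"
begin

lemma AP: "affine_plane Ls" using dap unfolding desargues_affine_plane_def by (rule conjunct1)
lemmas AP' = AP[unfolded affine_plane_def]
lemma ax1: "l \<in> Ls \<Longrightarrow> \<exists>P Q. P \<noteq> Q \<and> P \<in> l \<and> Q \<in> l"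
  using AP'[THEN conjunct1] by (rule bspec)
lemma ax2: "P \<noteq> Q \<Longrightarrow> \<exists>!l. l \<in> Ls \<and> P \<in> l \<and> Q \<in> l"
  using AP'[THEN conjunct2, THEN conjunct1] by simp
lemma ax3: "l \<in> Ls \<Longrightarrow> P \<notin> l \<Longrightarrow> \<exists>!m. m \<in> Ls \<and> P \<in> m \<and> m \<inter> l = {}"
  using AP'[THEN conjunct2, THEN conjunct2, THEN conjunct1] by simp
lemma ax4: "\<exists>P Q R. \<not> collinear Ls P Q R"
  using AP'[THEN conjunct2, THEN conjunct2, THEN conjunct2] by simp

lemma desarg:
  assumes "A \<noteq> A'" "B \<noteq> B'" "C \<noteq> C'" "A \<noteq> B" "B \<noteq> C" "A' \<noteq> B'" "B' \<noteq> C'"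
    "A \<noteq> C" "A' \<noteq> C'"
    "line_of Ls A A' \<noteq> line_of Ls B B'" "line_of Ls B B' \<noteq> line_of Ls C C'"
    "line_of Ls A A' \<noteq> line_of Ls C C'"
    "(parallel Ls (line_of Ls A A') (line_of Ls B B') \<and>
          parallel Ls (line_of Ls B B') (line_of Ls C C') \<and>
          parallel Ls (line_of Ls A A') (line_of Ls C C')) \<or>
         (\<exists>S. S \<in> line_of Ls A A' \<and> S \<in> line_of Ls B B' \<and> S \<in> line_of Ls C C')"
    "parallel Ls (line_of Ls A B) (line_of Ls A' B')"
    "parallel Ls (line_of Ls B C) (line_of Ls B' C')"
    "line_of Ls A B \<noteq> line_of Ls A' B'" "line_of Ls B C \<noteq> line_of Ls B' C'"
  shows "parallel Ls (line_of Ls A C) (line_of Ls A' C')"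
proof -
  have H: "desargues_axiom Ls" using dap unfolding desargues_affine_plane_def by blast
  show ?thesis
    by (rule H[unfolded desargues_axiom_def, rule_format], intro conjI) (use assms in auto)
qed

lemma line_of_comm: "line_of Ls P Q = line_of Ls Q P"
  unfolding line_of_def by (simp add: conj_commute)

lemma line_props:
  assumes "P \<noteq> Q"
  shows "line_of Ls P Q \<in> Ls" "P \<in> line_of Ls P Q" "Q \<in> line_of Ls P Q"
  using theI'[OF ax2[OF assms]] unfolding line_of_def by auto

lemma line_eq: "l \<in> Ls \<Longrightarrow> P \<in> l \<Longrightarrow> Q \<in> l \<Longrightarrow> P \<noteq> Q \<Longrightarrow> line_of Ls P Q = l"
  unfolding line_of_def by (rule the1_equality[OF ax2]) auto

lemma two_pts: "l \<in> Ls \<Longrightarrow> m \<in> Ls \<Longrightarrow> P \<in> l \<Longrightarrow> P \<in> m \<Longrightarrow> Q \<in> l \<Longrightarrow> Q \<in> m \<Longrightarrow> P \<noteq> Q \<Longrightarrow> l = m"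
  using line_eq[of l P Q] line_eq[of m P Q] by simp

lemma off_line: assumes "l \<in> Ls" shows "\<exists>P. P \<notin> l"
proof -
  obtain P Q R where "\<not> collinear Ls P Q R" using ax4 by blast
  then have "\<not> (P \<in> l \<and> Q \<in> l \<and> R \<in> l)" using assms unfolding collinear_def by blast
  then show ?thesis by blast
qed

lemma par_refl: "l \<in> Ls \<Longrightarrow> parallel Ls l l"
  unfolding parallel_def by auto
lemma par_sym: "parallel Ls l m \<Longrightarrow> parallel Ls m l"
  unfolding parallel_def by auto
lemma par_Ls: "parallel Ls l m \<Longrightarrow> l \<in> Ls" "parallel Ls l m \<Longrightarrow> m \<in> Ls"
  unfolding parallel_def by auto

lemma par_ex1: assumes "l \<in> Ls" shows "\<exists>!m. m \<in> Ls \<and> P \<in> m \<and> parallel Ls m l"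
proof (cases "P \<in> l")
  case True
  show ?thesis
  proof (rule ex1I[of _ l])
    show "l \<in> Ls \<and> P \<in> l \<and> parallel Ls l l" using True assms par_refl by auto
  next
    fix m assume "m \<in> Ls \<and> P \<in> m \<and> parallel Ls m l"
    then show "m = l" using True unfolding parallel_def by auto
  qed
next
  case False
  obtain m where m: "m \<in> Ls" "P \<in> m" "m \<inter> l = {}" using ax3[OF assms False] by blast
  show ?thesis
  proof (rule ex1I[of _ m])
    show "m \<in> Ls \<and> P \<in> m \<and> parallel Ls m l" using m assms unfolding parallel_def by auto
  next
    fix m' assume "m' \<in> Ls \<and> P \<in> m' \<and> parallel Ls m' l"
    then have "m' \<in> Ls" "P \<in> m'" "m' \<inter> l = {}" using False unfolding parallel_def by auto
    then show "m' = m" using ax3[OF assms False] m by blast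
  qed
qed

lemma pt_props:
  assumes "l \<in> Ls"
  shows "par_through Ls P l \<in> Ls" "P \<in> par_through Ls P l" "parallel Ls (par_through Ls P l) l"
  using theI'[OF par_ex1[OF assms, of P]] unfolding par_through_def by auto

lemma pt_eq: "l \<in> Ls \<Longrightarrow> m \<in> Ls \<Longrightarrow> P \<in> m \<Longrightarrow> parallel Ls m l \<Longrightarrow> par_through Ls P l = m"
  unfolding par_through_def by (rule the1_equality[OF par_ex1]) auto

lemma pt_self: "l \<in> Ls \<Longrightarrow> P \<in> l \<Longrightarrow> par_through Ls P l = l"
  using pt_eq par_refl by blast

lemma par_trans: assumes "parallel Ls l m" "parallel Ls m n" shows "parallel Ls l n"
proof -
  have L: "l \<in> Ls" "m \<in> Ls" "n \<in> Ls" using assms par_Ls by auto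
  show ?thesis
  proof (cases "l \<inter> n = {}")
    case True then show ?thesis using L unfolding parallel_def by auto
  next
    case False
    then obtain P where "P \<in> l" "P \<in> n" by auto
    then have "par_through Ls P m = l" "par_through Ls P m = n"
      using pt_eq[OF L(2) L(1) _ assms(1)] pt_eq[OF L(2) L(3) _ par_sym[OF assms(2)]] by auto
    then show ?thesis using L par_refl by auto
  qed
qed

lemma meet_eq: "l \<in> Ls \<Longrightarrow> m \<in> Ls \<Longrightarrow> l \<noteq> m \<Longrightarrow> X \<in> l \<Longrightarrow> X \<in> m \<Longrightarrow> meet l m = X"
  unfolding meet_def using two_pts by blast

lemma nonpar_meet:
  assumes "l \<in> Ls" "m \<in> Ls" "\<not> parallel Ls l m"
  shows "meet l m \<in> l" "meet l m \<in> m"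
proof -
  obtain X where X: "X \<in> l" "X \<in> m" "l \<noteq> m" using assms unfolding parallel_def by auto
  then have "meet l m = X" using meet_eq assms by auto
  then show "meet l m \<in> l" "meet l m \<in> m" using X by auto
qed

lemma cross_nonpar: "l \<in> Ls \<Longrightarrow> m \<in> Ls \<Longrightarrow> l \<noteq> m \<Longrightarrow> X \<in> l \<Longrightarrow> X \<in> m \<Longrightarrow> \<not> parallel Ls l m"
  unfolding parallel_def by auto

lemma par_disj: "parallel Ls l m \<Longrightarrow> l \<noteq> m \<Longrightarrow> X \<in> l \<Longrightarrow> X \<notin> m"
  unfolding parallel_def by auto

lemma par_same: "parallel Ls l m \<Longrightarrow> X \<in> l \<Longrightarrow> X \<in> m \<Longrightarrow> l = m"
  unfolding parallel_def by auto


lemma line_off: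
  assumes "l \<in> Ls" "X \<in> l" "B1 \<notin> l"
  shows "line_of Ls X B1 \<in> Ls" "X \<in> line_of Ls X B1" "B1 \<in> line_of Ls X B1"
    "line_of Ls X B1 \<noteq> l" "\<not> parallel Ls l (line_of Ls X B1)" "\<not> parallel Ls (line_of Ls X B1) l"
proof -
  have ne: "X \<noteq> B1" using assms by auto
  show 1: "line_of Ls X B1 \<in> Ls" "X \<in> line_of Ls X B1" "B1 \<in> line_of Ls X B1"
    using line_props[OF ne] by auto
  show 2: "line_of Ls X B1 \<noteq> l" using 1 assms by auto
  show "\<not> parallel Ls l (line_of Ls X B1)" using cross_nonpar[OF assms(1) 1(1) 2[symmetric] assms(2) 1(2)] .
  then show "\<not> parallel Ls (line_of Ls X B1) l" using par_sym by auto
qed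

lemma line_off_meet:
  assumes "l \<in> Ls" "X \<in> l" "B1 \<notin> l" "Y \<in> l" "Y \<in> line_of Ls X B1"
  shows "Y = X"
proof (rule ccontr)
  assume "Y \<noteq> X"
  then have "line_of Ls X B1 = l"
    using two_pts[OF line_off(1)[OF assms(1-3)] assms(1) line_off(2)[OF assms(1-3)] assms(2) assms(5) assms(4)] by auto
  then show False using line_off(4)[OF assms(1-3)] by simp
qed

lemma npar_of_par: "parallel Ls k m \<Longrightarrow> k' \<in> Ls \<Longrightarrow> \<not> parallel Ls k' m \<Longrightarrow> \<not> parallel Ls k' k"
  using par_trans by blast

lemma fin_props:
  assumes "l \<in> Ls" "B \<in> l" "B1 \<notin> l"
  shows "fin Ls l P B1 B \<in> l" "fin Ls l P B1 B \<in> par_through Ls P (line_of Ls B B1)"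
    "\<not> parallel Ls l (par_through Ls P (line_of Ls B B1))"
proof -
  note L = line_off[OF assms]
  have k: "par_through Ls P (line_of Ls B B1) \<in> Ls"
       "parallel Ls (par_through Ls P (line_of Ls B B1)) (line_of Ls B B1)"
    using pt_props[OF L(1)] by auto
  show np: "\<not> parallel Ls l (par_through Ls P (line_of Ls B B1))"
    using npar_of_par[OF k(2) assms(1)] L(5) by blast
  show "fin Ls l P B1 B \<in> l" "fin Ls l P B1 B \<in> par_through Ls P (line_of Ls B B1)"
    using nonpar_meet[OF assms(1) k(1) np] unfolding fin_def by auto
qed

lemma fin_eq:
  assumes "l \<in> Ls" "B \<in> l" "B1 \<notin> l" "X \<in> l" "m \<in> Ls" "X \<in> m" "P \<in> m"
    "parallel Ls m (line_of Ls B B1)"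
  shows "fin Ls l P B1 B = X"
proof -
  note L = line_off[OF assms(1-3)]
  have "par_through Ls P (line_of Ls B B1) = m" using pt_eq[OF L(1) assms(5,7,8)] .
  moreover have "m \<noteq> l" using assms(8) L(5) by auto
  ultimately show ?thesis unfolding fin_def using meet_eq[OF assms(1,5)] assms by auto
qed

lemma fin_XB:
  assumes "l \<in> Ls" "B \<in> l" "B1 \<notin> l" "fin Ls l P B1 B = B"
  shows "P \<in> line_of Ls B B1"
proof -
  note L = line_off[OF assms(1-3)]
  note F = fin_props[OF assms(1-3), of P]
  have "par_through Ls P (line_of Ls B B1) = line_of Ls B B1"
    using par_same[OF pt_props(3)[OF L(1), of P] F(2)[unfolded assms(4)] L(2)] .
  then show ?thesis using pt_props(2)[OF L(1), of P] by simp
qed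

lemma fin_inj:
  assumes "l \<in> Ls" "B \<in> l" "B' \<in> l" "B1 \<notin> l" "P \<notin> l" "fin Ls l P B1 B = fin Ls l P B1 B'"
  shows "B = B'"
proof -
  note L = line_off[OF assms(1,2,4)] and L' = line_off[OF assms(1,3,4)]
  note F = fin_props[OF assms(1,2,4), of P] and F' = fin_props[OF assms(1,3,4), of P]
  obtain X where X_def: "X = fin Ls l P B1 B" by blast
  have F2: "X \<in> par_through Ls P (line_of Ls B B1)" using F(2) unfolding X_def .
  have F2': "X \<in> par_through Ls P (line_of Ls B' B1)" using F'(2) unfolding X_def assms(6) .
  have XP: "X \<noteq> P" using F(1) assms(5) unfolding X_def by (rule_tac notI) simp
  have k: "line_of Ls X P = par_through Ls P (line_of Ls B B1)"
    using line_eq[OF pt_props(1)[OF L(1)] F2 pt_props(2)[OF L(1)] XP] .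
  have k': "line_of Ls X P = par_through Ls P (line_of Ls B' B1)"
    using line_eq[OF pt_props(1)[OF L'(1)] F2' pt_props(2)[OF L'(1)] XP] .
  have "parallel Ls (line_of Ls B B1) (line_of Ls B' B1)"
    using par_trans[OF pt_props(3)[OF L(1), of P, folded k, THEN par_sym] pt_props(3)[OF L'(1), of P, folded k']] .
  then have e: "line_of Ls B B1 = line_of Ls B' B1" using par_same[OF _ L(3) L'(3)] by blast
  have "B' \<in> line_of Ls B B1" using L'(2) unfolding e .
  then show ?thesis using line_off_meet[OF assms(1,2,4,3)] by blast
qed

lemma fin_surj:
  assumes "l \<in> Ls" "B1 \<notin> l" "P \<notin> l" "T \<in> l"
  shows "\<exists>B\<in>l. fin Ls l P B1 B = T"
proof -
  have TP: "T \<noteq> P" using assms by auto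
  note LT = line_props[OF TP]
  have npTP: "\<not> parallel Ls l (line_of Ls T P)"
    using cross_nonpar[OF assms(1) LT(1) _ assms(4) LT(2)] LT(3) assms(3) by blast
  define k where "k = par_through Ls B1 (line_of Ls T P)"
  have k: "k \<in> Ls" "B1 \<in> k" "parallel Ls k (line_of Ls T P)" using pt_props[OF LT(1)] k_def by auto
  have npk: "\<not> parallel Ls l k" using npar_of_par[OF k(3) assms(1) npTP] .
  define B where "B = meet l k"
  have B: "B \<in> l" "B \<in> k" using nonpar_meet[OF assms(1) k(1) npk] B_def by auto
  have BB1: "B \<noteq> B1" using B assms by auto
  have "line_of Ls B B1 = k" using line_eq[OF k(1) B(2) k(2) BB1] .
  then have "fin Ls l P B1 B = T"
    using fin_eq[OF assms(1) B(1) assms(2) assms(4) LT(1) LT(2) LT(3)] k(3) par_sym by simp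
  then show ?thesis using B by blast
qed

lemma fin_injP:
  assumes "l \<in> Ls" "B \<in> l" "B1 \<notin> l" "n \<in> Ls" "P \<in> n" "P' \<in> n"
    "\<not> parallel Ls n (line_of Ls B B1)" "fin Ls l P B1 B = fin Ls l P' B1 B"
  shows "P = P'"
proof (rule ccontr)
  assume ne: "P \<noteq> P'"
  note L = line_off[OF assms(1-3)]
  have k: "parallel Ls (par_through Ls P (line_of Ls B B1)) (par_through Ls P' (line_of Ls B B1))"
    using par_trans[OF pt_props(3)[OF L(1), of P] par_sym[OF pt_props(3)[OF L(1), of P']]] .
  have f1: "fin Ls l P B1 B \<in> par_through Ls P (line_of Ls B B1)" by (rule fin_props(2)[OF assms(1-3)])
  have f2: "fin Ls l P B1 B \<in> par_through Ls P' (line_of Ls B B1)"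
    unfolding assms(8) by (rule fin_props(2)[OF assms(1-3)])
  have e: "par_through Ls P (line_of Ls B B1) = par_through Ls P' (line_of Ls B B1)"
    using par_same[OF k f1 f2] .
  have "par_through Ls P (line_of Ls B B1) = n"
    using two_pts[OF pt_props(1)[OF L(1)] assms(4) pt_props(2)[OF L(1)] assms(5) _ assms(6) ne]
      pt_props(2)[OF L(1), of P'] unfolding e by blast
  then show False using pt_props(3)[OF L(1), of P] assms(7) by simp
qed

lemma frame: "Oz \<noteq> Iu \<Longrightarrow> line_of Ls Oz Iu \<in> Ls \<and> Oz \<in> line_of Ls Oz Iu \<and> Iu \<in> line_of Ls Oz Iu"
  using line_props by blast

lemma fin_B1:
  assumes "l \<in> Ls" "B \<in> l" "B1 \<notin> l"
  shows "fin Ls l B1 B1 B = B"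
proof -
  note L = line_off[OF assms]
  show ?thesis by (rule fin_eq[OF assms assms(2) L(1) L(2) L(3) par_refl[OF L(1)]])
qed

lemma par_disj_pt:
  assumes "l \<in> Ls" "B1 \<notin> l" "X \<in> par_through Ls B1 l" shows "X \<notin> l"
proof -
  have "par_through Ls B1 l \<noteq> l" using pt_props(2)[OF assms(1), of B1] assms(2) by auto
  then show ?thesis using par_disj[OF pt_props(3)[OF assms(1)] _ assms(3)] by blast
qed

lemma addP_props:
  assumes "Oz \<noteq> Iu" "B1 \<notin> line_of Ls Oz Iu" "A \<in> line_of Ls Oz Iu"
  shows "addP Ls Oz Iu B1 A \<in> par_through Ls B1 (line_of Ls Oz Iu)"
    "addP Ls Oz Iu B1 A \<in> par_through Ls A (line_of Ls Oz B1)"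
    "addP Ls Oz Iu B1 A \<notin> line_of Ls Oz Iu"
    "\<not> parallel Ls (par_through Ls B1 (line_of Ls Oz Iu)) (par_through Ls A (line_of Ls Oz B1))"
    "A = Oz \<Longrightarrow> addP Ls Oz Iu B1 A = B1"
    "A \<noteq> Oz \<Longrightarrow> addP Ls Oz Iu B1 A \<noteq> B1"
proof -
  define l where "l = line_of Ls Oz Iu"
  have l: "l \<in> Ls" "Oz \<in> l" "Iu \<in> l" using frame[OF assms(1)] l_def by auto
  have B1: "B1 \<notin> l" "A \<in> l" using assms l_def by auto
  define m1 where "m1 = par_through Ls B1 l"
  have m1: "m1 \<in> Ls" "B1 \<in> m1" "parallel Ls m1 l" using pt_props[OF l(1)] m1_def by auto
  note LO = line_off[OF l(1) l(2) B1(1)]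
  define n1 where "n1 = par_through Ls A (line_of Ls Oz B1)"
  have n1: "n1 \<in> Ls" "A \<in> n1" "parallel Ls n1 (line_of Ls Oz B1)" using pt_props[OF LO(1)] n1_def by auto
  have np: "\<not> parallel Ls m1 n1"
  proof
    assume "parallel Ls m1 n1"
    then have "parallel Ls l (line_of Ls Oz B1)"
      using par_trans[OF par_trans[OF par_sym[OF m1(3)]] n1(3)] by blast
    then show False using LO(5) by blast
  qed
  then show "\<not> parallel Ls (par_through Ls B1 (line_of Ls Oz Iu)) (par_through Ls A (line_of Ls Oz B1))"
    unfolding m1_def n1_def l_def .
  have P: "meet m1 n1 \<in> m1" "meet m1 n1 \<in> n1" using nonpar_meet[OF m1(1) n1(1) np] by auto
  then show a1: "addP Ls Oz Iu B1 A \<in> par_through Ls B1 (line_of Ls Oz Iu)"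
    "addP Ls Oz Iu B1 A \<in> par_through Ls A (line_of Ls Oz B1)"
    unfolding addP_def m1_def n1_def l_def by auto
  show "addP Ls Oz Iu B1 A \<notin> line_of Ls Oz Iu"
    using par_disj_pt[OF l(1) B1(1)] a1(1) unfolding l_def by blast
  show "A = Oz \<Longrightarrow> addP Ls Oz Iu B1 A = B1"
  proof -
    assume "A = Oz"
    then have "n1 = line_of Ls Oz B1" using pt_self[OF LO(1) LO(2)] n1_def by simp
    moreover have "m1 \<noteq> n1" using np par_refl[OF m1(1)] by auto
    ultimately have "meet m1 n1 = B1" using meet_eq[OF m1(1) n1(1) _ m1(2)] LO(3) by simp
    then show ?thesis unfolding addP_def m1_def n1_def l_def .
  qed
  show "A \<noteq> Oz \<Longrightarrow> addP Ls Oz Iu B1 A \<noteq> B1"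
  proof
    assume "A \<noteq> Oz" "addP Ls Oz Iu B1 A = B1"
    then have "B1 \<in> n1" using P(2) unfolding addP_def m1_def n1_def l_def by simp
    then have "n1 = line_of Ls Oz B1" using par_same[OF n1(3) _ LO(3)] by blast
    then have "A \<in> line_of Ls Oz B1" using n1(2) by simp
    then have "A = Oz" using line_off_meet[OF l(1) l(2) B1(1) B1(2)] by blast
    then show False using \<open>A \<noteq> Oz\<close> by simp
  qed
qed

lemma addP_inj:
  assumes "Oz \<noteq> Iu" "B1 \<notin> line_of Ls Oz Iu" "A \<in> line_of Ls Oz Iu" "A' \<in> line_of Ls Oz Iu"
    "addP Ls Oz Iu B1 A = addP Ls Oz Iu B1 A'"
  shows "A = A'"
proof (rule ccontr)
  assume ne: "A \<noteq> A'"
  define l where "l = line_of Ls Oz Iu"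
  have l: "l \<in> Ls" "Oz \<in> l" "Iu \<in> l" using frame[OF assms(1)] l_def by auto
  have B1: "B1 \<notin> l" "A \<in> l" "A' \<in> l" using assms l_def by auto
  note LO = line_off[OF l(1) l(2) B1(1)]
  have k: "parallel Ls (par_through Ls A (line_of Ls Oz B1)) (par_through Ls A' (line_of Ls Oz B1))"
    using par_trans[OF pt_props(3)[OF LO(1), of A] par_sym[OF pt_props(3)[OF LO(1), of A']]] .
  have "par_through Ls A (line_of Ls Oz B1) = par_through Ls A' (line_of Ls Oz B1)"
    using par_same[OF k addP_props(2)[OF assms(1-3)]] addP_props(2)[OF assms(1,2,4)] assms(5) by simp
  then have "A' \<in> par_through Ls A (line_of Ls Oz B1)" using pt_props(2)[OF LO(1), of A'] by simp
  then have "par_through Ls A (line_of Ls Oz B1) = l"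
    using two_pts[OF pt_props(1)[OF LO(1)] l(1) pt_props(2)[OF LO(1)] B1(2) _ B1(3) ne] by blast
  then show False using pt_props(3)[OF LO(1), of A] LO(5) by simp
qed

lemma mulP_props:
  assumes "Oz \<noteq> Iu" "B1 \<notin> line_of Ls Oz Iu" "A \<in> line_of Ls Oz Iu"
  shows "mulP Ls Oz Iu B1 A \<in> par_through Ls A (line_of Ls Iu B1)"
    "mulP Ls Oz Iu B1 A \<in> line_of Ls Oz B1"
    "\<not> parallel Ls (par_through Ls A (line_of Ls Iu B1)) (line_of Ls Oz B1)"
    "A = Oz \<Longrightarrow> mulP Ls Oz Iu B1 A = Oz"
    "A = Iu \<Longrightarrow> mulP Ls Oz Iu B1 A = B1"
    "A \<noteq> Oz \<Longrightarrow> mulP Ls Oz Iu B1 A \<notin> line_of Ls Oz Iu"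
    "A \<noteq> Iu \<Longrightarrow> mulP Ls Oz Iu B1 A \<noteq> B1"
proof -
  define l where "l = line_of Ls Oz Iu"
  have l: "l \<in> Ls" "Oz \<in> l" "Iu \<in> l" using frame[OF assms(1)] l_def by auto
  have B1: "B1 \<notin> l" "A \<in> l" using assms l_def by auto
  note LO = line_off[OF l(1) l(2) B1(1)]
  note LI = line_off[OF l(1) l(3) B1(1)]
  have IO: "Iu \<notin> line_of Ls Oz B1"
  proof
    assume "Iu \<in> line_of Ls Oz B1"
    then have "Iu = Oz" using line_off_meet[OF l(1) l(2) B1(1) l(3)] by blast
    then show False using assms(1) by simp
  qed
  have LIO: "line_of Ls Iu B1 \<noteq> line_of Ls Oz B1" using IO LI(2) by auto
  have npIO: "\<not> parallel Ls (line_of Ls Iu B1) (line_of Ls Oz B1)"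
    using cross_nonpar[OF LI(1) LO(1) LIO LI(3) LO(3)] .
  define q where "q = par_through Ls A (line_of Ls Iu B1)"
  have q: "q \<in> Ls" "A \<in> q" "parallel Ls q (line_of Ls Iu B1)" using pt_props[OF LI(1)] q_def by auto
  have np: "\<not> parallel Ls q (line_of Ls Oz B1)"
  proof
    assume "parallel Ls q (line_of Ls Oz B1)"
    then show False using par_trans[OF par_sym[OF q(3)]] npIO by blast
  qed
  then show "\<not> parallel Ls (par_through Ls A (line_of Ls Iu B1)) (line_of Ls Oz B1)" unfolding q_def .
  have qO: "q \<noteq> line_of Ls Oz B1" using np par_refl[OF q(1)] by auto
  have P: "meet q (line_of Ls Oz B1) \<in> q" "meet q (line_of Ls Oz B1) \<in> line_of Ls Oz B1"
    using nonpar_meet[OF q(1) LO(1) np] by auto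
  then show a1: "mulP Ls Oz Iu B1 A \<in> par_through Ls A (line_of Ls Iu B1)"
    "mulP Ls Oz Iu B1 A \<in> line_of Ls Oz B1"
    unfolding mulP_def q_def by auto
  show "A = Oz \<Longrightarrow> mulP Ls Oz Iu B1 A = Oz"
  proof -
    assume "A = Oz"
    then have "Oz \<in> q" using q(2) by simp
    then have "meet q (line_of Ls Oz B1) = Oz" using meet_eq[OF q(1) LO(1) qO _ LO(2)] by simp
    then show ?thesis unfolding mulP_def q_def .
  qed
  show "A = Iu \<Longrightarrow> mulP Ls Oz Iu B1 A = B1"
  proof -
    assume "A = Iu"
    then have "q = line_of Ls Iu B1" using pt_self[OF LI(1) LI(2)] q_def by simp
    then have "meet q (line_of Ls Oz B1) = B1" using meet_eq[OF q(1) LO(1) qO _ LO(3)] LI(3) by simp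
    then show ?thesis unfolding mulP_def q_def .
  qed
  show "A \<noteq> Oz \<Longrightarrow> mulP Ls Oz Iu B1 A \<notin> line_of Ls Oz Iu"
  proof
    assume "A \<noteq> Oz" "mulP Ls Oz Iu B1 A \<in> line_of Ls Oz Iu"
    then have "mulP Ls Oz Iu B1 A = Oz" using line_off_meet[OF l(1) l(2) B1(1) _ a1(2)] l_def by blast
    then have "Oz \<in> q" using a1(1) q_def by simp
    then have "q = l" using two_pts[OF q(1) l(1) q(2) B1(2) _ l(2)] \<open>A \<noteq> Oz\<close> by blast
    then show False using q(3) LI(5) by simp
  qed
  show "A \<noteq> Iu \<Longrightarrow> mulP Ls Oz Iu B1 A \<noteq> B1"
  proof
    assume "A \<noteq> Iu" "mulP Ls Oz Iu B1 A = B1"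
    then have "B1 \<in> q" using a1(1) q_def by simp
    then have "q = line_of Ls Iu B1" using par_same[OF q(3) _ LI(3)] by blast
    then have "A \<in> line_of Ls Iu B1" using q(2) by simp
    then have "A = Iu" using line_off_meet[OF l(1) l(3) B1(1) B1(2)] by blast
    then show False using \<open>A \<noteq> Iu\<close> by simp
  qed
qed

lemma addg_O:
  assumes "Oz \<noteq> Iu" "B1 \<notin> line_of Ls Oz Iu" "B \<in> line_of Ls Oz Iu"
  shows "addg Ls Oz Iu B1 Oz B = B"
  unfolding addg_def addP_props(5)[OF assms(1,2) conjunct1[OF conjunct2[OF frame[OF assms(1)]]] refl]
  using fin_B1[OF conjunct1[OF frame[OF assms(1)]] assms(3,2)] .

lemma mulg_I:
  assumes "Oz \<noteq> Iu" "B1 \<notin> line_of Ls Oz Iu" "B \<in> line_of Ls Oz Iu"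
  shows "mulg Ls Oz Iu B1 Iu B = B"
  unfolding mulg_def mulP_props(5)[OF assms(1,2) conjunct2[OF conjunct2[OF frame[OF assms(1)]]] refl]
  using fin_B1[OF conjunct1[OF frame[OF assms(1)]] assms(3,2)] .

lemma mulg_O1:
  assumes "Oz \<noteq> Iu" "B1 \<notin> line_of Ls Oz Iu" "B \<in> line_of Ls Oz Iu"
  shows "mulg Ls Oz Iu B1 Oz B = Oz"
proof -
  have l: "line_of Ls Oz Iu \<in> Ls" "Oz \<in> line_of Ls Oz Iu" using frame[OF assms(1)] by auto
  note L = line_off[OF l(1) assms(3,2)]
  show ?thesis
    unfolding mulg_def mulP_props(4)[OF assms(1,2) l(2) refl]
    by (rule fin_eq[OF l(1) assms(3,2) l(2) pt_props(1)[OF L(1)] pt_props(2)[OF L(1)] pt_props(2)[OF L(1)]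
          pt_props(3)[OF L(1)]])
qed

lemma mulg_O2:
  assumes "Oz \<noteq> Iu" "B1 \<notin> line_of Ls Oz Iu" "A \<in> line_of Ls Oz Iu"
  shows "mulg Ls Oz Iu B1 A Oz = Oz"
proof -
  have l: "line_of Ls Oz Iu \<in> Ls" "Oz \<in> line_of Ls Oz Iu" using frame[OF assms(1)] by auto
  note L = line_off[OF l(1) l(2) assms(2)]
  show ?thesis
    unfolding mulg_def
    by (rule fin_eq[OF l(1) l(2) assms(2) l(2) L(1) L(2) mulP_props(2)[OF assms] par_refl[OF L(1)]])
qed

lemma desarg_par:
  assumes "A \<noteq> A'" "B \<noteq> B'" "C \<noteq> C'" "A \<noteq> B" "B \<noteq> C" "A' \<noteq> B'" "B' \<noteq> C'"
    "A \<noteq> C" "A' \<noteq> C'"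
    "line_of Ls A A' \<noteq> line_of Ls B B'" "line_of Ls B B' \<noteq> line_of Ls C C'"
    "line_of Ls A A' \<noteq> line_of Ls C C'"
    "parallel Ls (line_of Ls A A') (line_of Ls B B')"
    "parallel Ls (line_of Ls B B') (line_of Ls C C')"
    "parallel Ls (line_of Ls A A') (line_of Ls C C')"
    "parallel Ls (line_of Ls A B) (line_of Ls A' B')"
    "parallel Ls (line_of Ls B C) (line_of Ls B' C')"
    "line_of Ls A B \<noteq> line_of Ls A' B'" "line_of Ls B C \<noteq> line_of Ls B' C'"
  shows "parallel Ls (line_of Ls A C) (line_of Ls A' C')"
  by (rule desarg[OF assms(1-12) disjI1[OF conjI[OF assms(13) conjI[OF assms(14,15)]]] assms(16-19)])

lemma desarg_conc:
  assumes "A \<noteq> A'" "B \<noteq> B'" "C \<noteq> C'" "A \<noteq> B" "B \<noteq> C" "A' \<noteq> B'" "B' \<noteq> C'"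
    "A \<noteq> C" "A' \<noteq> C'"
    "line_of Ls A A' \<noteq> line_of Ls B B'" "line_of Ls B B' \<noteq> line_of Ls C C'"
    "line_of Ls A A' \<noteq> line_of Ls C C'"
    "S \<in> line_of Ls A A'" "S \<in> line_of Ls B B'" "S \<in> line_of Ls C C'"
    "parallel Ls (line_of Ls A B) (line_of Ls A' B')"
    "parallel Ls (line_of Ls B C) (line_of Ls B' C')"
    "line_of Ls A B \<noteq> line_of Ls A' B'" "line_of Ls B C \<noteq> line_of Ls B' C'"
  shows "parallel Ls (line_of Ls A C) (line_of Ls A' C')"
  apply (rule desarg[OF assms(1-12) _ assms(16-19)])
  using assms(13-15) by blast

lemma add_indep_main:
  assumes OI: "Oz \<noteq> Iu" and B1l: "B1 \<notin> line_of Ls Oz Iu" and B2l: "B2 \<notin> line_of Ls Oz Iu"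
    and Al: "A \<in> line_of Ls Oz Iu" and Bl: "B \<in> line_of Ls Oz Iu" and AO: "A \<noteq> Oz"
    and B2m: "B2 \<notin> par_through Ls B1 (line_of Ls Oz Iu)"
  shows "addg Ls Oz Iu B1 A B = addg Ls Oz Iu B2 A B"
proof -
  define l where "l = line_of Ls Oz Iu"
  have l: "l \<in> Ls" "Oz \<in> l" "Iu \<in> l" using frame[OF OI] l_def by auto
  have pts: "B1 \<notin> l" "B2 \<notin> l" "A \<in> l" "B \<in> l" using assms l_def by auto
  define m1 where "m1 = par_through Ls B1 l"
  define m2 where "m2 = par_through Ls B2 l"
  have m1: "m1 \<in> Ls" "B1 \<in> m1" "parallel Ls m1 l" using pt_props[OF l(1)] m1_def by auto
  have m2: "m2 \<in> Ls" "B2 \<in> m2" "parallel Ls m2 l" using pt_props[OF l(1)] m2_def by auto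
  have m1l: "m1 \<noteq> l" using m1(2) pts(1) by auto
  have m2l: "m2 \<noteq> l" using m2(2) pts(2) by auto
  have B2m1: "B2 \<notin> m1" using B2m m1_def l_def by simp
  have m12: "m1 \<noteq> m2" using B2m1 m2(2) by auto
  have pm12: "parallel Ls m1 m2" using par_trans[OF m1(3) par_sym[OF m2(3)]] .
  have nlm1: "\<And>Z. Z \<in> l \<Longrightarrow> Z \<notin> m1" using par_disj[OF par_sym[OF m1(3)] m1l[symmetric]] by blast
  have nlm2: "\<And>Z. Z \<in> l \<Longrightarrow> Z \<notin> m2" using par_disj[OF par_sym[OF m2(3)] m2l[symmetric]] by blast
  define P1 where "P1 = addP Ls Oz Iu B1 A"
  define P2 where "P2 = addP Ls Oz Iu B2 A"
  note AP1 = addP_props[OF OI B1l Al, folded l_def m1_def P1_def]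
  note AP2 = addP_props[OF OI B2l Al, folded l_def m2_def P2_def]
  note LO1 = line_off[OF l(1) l(2) pts(1)]
  note LO2 = line_off[OF l(1) l(2) pts(2)]
  define n1 where "n1 = par_through Ls A (line_of Ls Oz B1)"
  define n2 where "n2 = par_through Ls A (line_of Ls Oz B2)"
  have n1: "n1 \<in> Ls" "A \<in> n1" "parallel Ls n1 (line_of Ls Oz B1)" using pt_props[OF LO1(1)] n1_def by auto
  have n2: "n2 \<in> Ls" "A \<in> n2" "parallel Ls n2 (line_of Ls Oz B2)" using pt_props[OF LO2(1)] n2_def by auto
  have P1: "P1 \<in> m1" "P1 \<in> n1" "P1 \<notin> l" "P1 \<noteq> B1" using AP1(1,2,3) AP1(6)[OF AO] n1_def by auto
  have P2: "P2 \<in> m2" "P2 \<in> n2" "P2 \<notin> l" "P2 \<noteq> B2" using AP2(1,2,3) AP2(6)[OF AO] n2_def by auto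
  have AnLO1: "A \<notin> line_of Ls Oz B1" using line_off_meet[OF l(1) l(2) pts(1) pts(3)] AO by blast
  have AnLO2: "A \<notin> line_of Ls Oz B2" using line_off_meet[OF l(1) l(2) pts(2) pts(3)] AO by blast
  have AP1ne: "A \<noteq> P1" using P1(3) pts(3) by blast
  have AP2ne: "A \<noteq> P2" using P2(3) pts(3) by blast
  have eAP1: "line_of Ls A P1 = n1" by (rule line_eq[OF n1(1) n1(2) P1(2) AP1ne])
  have eAP2: "line_of Ls A P2 = n2" by (rule line_eq[OF n2(1) n2(2) P2(2) AP2ne])
  have eB1P1: "line_of Ls B1 P1 = m1" by (rule line_eq[OF m1(1) m1(2) P1(1) P1(4)[symmetric]])
  have eB2P2: "line_of Ls B2 P2 = m2" by (rule line_eq[OF m2(1) m2(2) P2(1) P2(4)[symmetric]])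
  have eOA: "line_of Ls Oz A = l" by (rule line_eq[OF l(1) l(2) pts(3) AO[symmetric]])
  have n1LO1: "line_of Ls Oz B1 \<noteq> n1" using n1(2) AnLO1 by auto
  have n2LO2: "line_of Ls Oz B2 \<noteq> n2" using n2(2) AnLO2 by auto
  have P12: "P1 \<noteq> P2" using par_disj[OF pm12 m12 P1(1)] P2(1) by auto
  have B12: "B1 \<noteq> B2" using m1(2) B2m1 by auto
  have OB1: "Oz \<noteq> B1" using l(2) pts(1) by auto
  have OB2: "Oz \<noteq> B2" using l(2) pts(2) by auto
  have D1: "parallel Ls (line_of Ls B1 B2) (line_of Ls P1 P2)"
  proof (rule desarg_par[of B1 P1 Oz A B2 P2])
    show "B1 \<noteq> P1" "Oz \<noteq> A" "B2 \<noteq> P2" "B1 \<noteq> Oz" "Oz \<noteq> B2" "P1 \<noteq> A" "A \<noteq> P2" "B1 \<noteq> B2" "P1 \<noteq> P2"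
      using P1(4) AO P2(4) OB1 OB2 AP1ne AP2ne B12 P12 by auto
    show "line_of Ls B1 P1 \<noteq> line_of Ls Oz A" "line_of Ls Oz A \<noteq> line_of Ls B2 P2"
      "line_of Ls B1 P1 \<noteq> line_of Ls B2 P2"
      unfolding eB1P1 eB2P2 eOA using m1l m2l m12 by auto
    show "parallel Ls (line_of Ls B1 P1) (line_of Ls Oz A)" "parallel Ls (line_of Ls Oz A) (line_of Ls B2 P2)"
      "parallel Ls (line_of Ls B1 P1) (line_of Ls B2 P2)"
      unfolding eB1P1 eB2P2 eOA using m1(3) par_sym[OF m2(3)] pm12 by auto
    show "parallel Ls (line_of Ls B1 Oz) (line_of Ls P1 A)" "parallel Ls (line_of Ls Oz B2) (line_of Ls A P2)"
      "line_of Ls B1 Oz \<noteq> line_of Ls P1 A" "line_of Ls Oz B2 \<noteq> line_of Ls A P2"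
      unfolding line_of_comm[of B1 Oz] line_of_comm[of P1 A] eAP1 eAP2
      using par_sym[OF n1(3)] par_sym[OF n2(3)] n1LO1 n2LO2 by auto
  qed
  define X where "X = fin Ls l P1 B1 B"
  have X: "X \<in> l" "X \<in> par_through Ls P1 (line_of Ls B B1)"
    using fin_props[OF l(1) pts(4) pts(1), of P1] X_def by auto
  note LB1 = line_off[OF l(1) pts(4) pts(1)]
  note LB2 = line_off[OF l(1) pts(4) pts(2)]
  define k1 where "k1 = par_through Ls P1 (line_of Ls B B1)"
  have k1: "k1 \<in> Ls" "P1 \<in> k1" "parallel Ls k1 (line_of Ls B B1)" "X \<in> k1"
    using pt_props[OF LB1(1)] k1_def X by auto
  have BX: "B \<noteq> X"
  proof
    assume "B = X"
    then have "fin Ls l P1 B1 B = B" using X_def by simp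
    then have "P1 \<in> line_of Ls B B1" using fin_XB[OF l(1) pts(4) pts(1)] by blast
    moreover have "line_of Ls B B1 \<noteq> m1" using LB1(2) nlm1[OF pts(4)] by auto
    ultimately show False using two_pts[OF LB1(1) m1(1) _ P1(1) LB1(3) m1(2) P1(4)] by blast
  qed
  have XP1: "X \<noteq> P1" using X(1) P1(3) by auto
  have XP2: "X \<noteq> P2" using X(1) P2(3) by auto
  have eXP1: "line_of Ls X P1 = k1" by (rule line_eq[OF k1(1) k1(4) k1(2) XP1])
  have eBX: "line_of Ls B X = l" by (rule line_eq[OF l(1) pts(4) X(1) BX])
  have BB1: "B \<noteq> B1" "B \<noteq> B2" using pts by auto
  have ne16: "line_of Ls B B1 \<noteq> line_of Ls X P1"
  proof
    assume "line_of Ls B B1 = line_of Ls X P1"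
    then have "X \<in> line_of Ls B B1" using line_props(2)[OF XP1] by simp
    then show False using line_off_meet[OF l(1) pts(4) pts(1) X(1)] BX by simp
  qed
  have ne17: "line_of Ls B1 B2 \<noteq> line_of Ls P1 P2"
  proof
    assume "line_of Ls B1 B2 = line_of Ls P1 P2"
    then have "P1 \<in> line_of Ls B1 B2" using line_props(2)[OF P12] by simp
    moreover have "line_of Ls B1 B2 \<noteq> m1" using line_props(3)[OF B12] B2m1 by auto
    ultimately show False
      using two_pts[OF line_props(1)[OF B12] m1(1) _ P1(1) line_props(2)[OF B12] m1(2) P1(4)] by blast
  qed
  have D2: "parallel Ls (line_of Ls B B2) (line_of Ls X P2)"
  proof (rule desarg_par[of B X B1 P1 B2 P2])
    show "B \<noteq> X" "B1 \<noteq> P1" "B2 \<noteq> P2" "B \<noteq> B1" "B1 \<noteq> B2" "X \<noteq> P1" "P1 \<noteq> P2" "B \<noteq> B2" "X \<noteq> P2"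
      using BX P1(4) P2(4) BB1 B12 XP1 P12 XP2 by auto
    show "line_of Ls B X \<noteq> line_of Ls B1 P1" "line_of Ls B1 P1 \<noteq> line_of Ls B2 P2"
      "line_of Ls B X \<noteq> line_of Ls B2 P2"
      unfolding eB1P1 eB2P2 eBX using m1l m2l m12 by auto
    show "parallel Ls (line_of Ls B X) (line_of Ls B1 P1)" "parallel Ls (line_of Ls B1 P1) (line_of Ls B2 P2)"
      "parallel Ls (line_of Ls B X) (line_of Ls B2 P2)"
      unfolding eB1P1 eB2P2 eBX using par_sym[OF m1(3)] par_sym[OF m2(3)] pm12 by auto
    show "parallel Ls (line_of Ls B B1) (line_of Ls X P1)"
      unfolding eXP1 using par_sym[OF k1(3)] .
    show "parallel Ls (line_of Ls B1 B2) (line_of Ls P1 P2)" by (rule D1)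
    show "line_of Ls B B1 \<noteq> line_of Ls X P1" by (rule ne16)
    show "line_of Ls B1 B2 \<noteq> line_of Ls P1 P2" by (rule ne17)
  qed
  note LXP2 = line_props[OF XP2]
  have "fin Ls l P2 B2 B = X"
    by (rule fin_eq[OF l(1) pts(4) pts(2) X(1) LXP2(1) LXP2(2) LXP2(3) par_sym[OF D2]])
  then show ?thesis unfolding addg_def l_def[symmetric] P1_def[symmetric] P2_def[symmetric] X_def by simp
qed

lemma addg_neB:
  assumes OI: "Oz \<noteq> Iu" and B1l: "B1 \<notin> line_of Ls Oz Iu"
    and Al: "A \<in> line_of Ls Oz Iu" and Bl: "B \<in> line_of Ls Oz Iu" and AO: "A \<noteq> Oz"
  shows "addg Ls Oz Iu B1 A B \<noteq> B"
proof
  assume h: "addg Ls Oz Iu B1 A B = B"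
  define l where "l = line_of Ls Oz Iu"
  have l: "l \<in> Ls" "Oz \<in> l" "Iu \<in> l" using frame[OF OI] l_def by auto
  have pts: "B1 \<notin> l" "A \<in> l" "B \<in> l" using assms l_def by auto
  define m1 where "m1 = par_through Ls B1 l"
  have m1: "m1 \<in> Ls" "B1 \<in> m1" "parallel Ls m1 l" using pt_props[OF l(1)] m1_def by auto
  have m1l: "m1 \<noteq> l" using m1(2) pts(1) by auto
  have nlm1: "\<And>Z. Z \<in> l \<Longrightarrow> Z \<notin> m1" using par_disj[OF par_sym[OF m1(3)] m1l[symmetric]] by blast
  define P1 where "P1 = addP Ls Oz Iu B1 A"
  note AP1 = addP_props[OF OI B1l Al, folded l_def m1_def P1_def]
  note LB1 = line_off[OF l(1) pts(3) pts(1)]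
  have "fin Ls l P1 B1 B = B" using h unfolding addg_def l_def P1_def .
  then have "P1 \<in> line_of Ls B B1" using fin_XB[OF l(1) pts(3) pts(1)] by blast
  moreover have "line_of Ls B B1 \<noteq> m1" using LB1(2) nlm1[OF pts(3)] by auto
  ultimately show False using two_pts[OF LB1(1) m1(1) _ AP1(1) LB1(3) m1(2) AP1(6)[OF AO]] by blast
qed

lemma add_degen:
  assumes OI: "Oz \<noteq> Iu" and B1l: "B1 \<notin> line_of Ls Oz Iu" and B2l: "B2 \<notin> line_of Ls Oz Iu"
    and Al: "A \<in> line_of Ls Oz Iu" and Bl: "B \<in> line_of Ls Oz Iu" and AO: "A \<noteq> Oz"
    and B2m: "B2 \<in> par_through Ls B1 (line_of Ls Oz Iu)"
    and all: "\<And>Z. Z \<in> line_of Ls Oz Iu \<or> Z \<in> par_through Ls B1 (line_of Ls Oz Iu)"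
  shows "addg Ls Oz Iu B1 A B = addg Ls Oz Iu B2 A B"
proof -
  define l where "l = line_of Ls Oz Iu"
  have l: "l \<in> Ls" "Oz \<in> l" "Iu \<in> l" using frame[OF OI] l_def by auto
  have pts: "B1 \<notin> l" "B2 \<notin> l" "A \<in> l" "B \<in> l" using assms l_def by auto
  define m1 where "m1 = par_through Ls B1 l"
  have m1: "m1 \<in> Ls" "B1 \<in> m1" "parallel Ls m1 l" "B2 \<in> m1" using pt_props[OF l(1)] m1_def B2m l_def by auto
  have all': "\<And>Z. Z \<in> l \<or> Z \<in> m1" using all l_def m1_def by auto
  have m1l: "m1 \<noteq> l" using m1(2) pts(1) by auto
  have nlm1: "\<And>Z. Z \<in> l \<Longrightarrow> Z \<notin> m1" using par_disj[OF par_sym[OF m1(3)] m1l[symmetric]] by blast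
  have m2: "par_through Ls B2 l = m1" by (rule pt_eq[OF l(1) m1(1) m1(4) m1(3)])
  define P2 where "P2 = addP Ls Oz Iu B2 A"
  note AP2 = addP_props[OF OI B2l Al, folded l_def P2_def, unfolded m2]
  define X where "X = addg Ls Oz Iu B1 A B"
  have X: "X \<in> l" unfolding X_def addg_def l_def[symmetric] using fin_props(1)[OF l(1) pts(4) pts(1)] .
  have XB: "X \<noteq> B" using addg_neB[OF OI B1l Al Bl AO] X_def by simp
  have XP2: "X \<noteq> P2" using X AP2(3) by auto
  have BB2: "B \<noteq> B2" using pts by auto
  have two: "\<And>n U V Z. n \<in> Ls \<Longrightarrow> U \<in> n \<Longrightarrow> V \<in> n \<Longrightarrow> U \<in> l \<Longrightarrow> V \<in> m1 \<Longrightarrow> Z \<in> n \<Longrightarrow> Z = U \<or> Z = V"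
  proof -
    fix n U V Z assume h: "n \<in> Ls" "U \<in> n" "V \<in> n" "U \<in> l" "V \<in> m1" "Z \<in> n"
    have nl: "n \<noteq> l" using h(3,5) nlm1 by auto
    have nm: "n \<noteq> m1" using h(2,4) nlm1 by auto
    show "Z = U \<or> Z = V"
    proof (cases "Z \<in> l")
      case True
      then show ?thesis using two_pts[OF h(1) l(1) h(2) h(4) h(6) True] nl by blast
    next
      case False
      then have "Z \<in> m1" using all' by blast
      then show ?thesis using two_pts[OF h(1) m1(1) h(3) h(5) h(6) \<open>Z \<in> m1\<close>] nm by blast
    qed
  qed
  note L1 = line_props[OF XP2]
  note L2 = line_props[OF BB2]
  have disj: "line_of Ls X P2 \<inter> line_of Ls B B2 = {}"
  proof (rule ccontr)
    assume "line_of Ls X P2 \<inter> line_of Ls B B2 \<noteq> {}"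
    then obtain Z where Z: "Z \<in> line_of Ls X P2" "Z \<in> line_of Ls B B2" by blast
    have "Z = X \<or> Z = P2" using two[OF L1(1) L1(2) L1(3) X AP2(1) Z(1)] .
    moreover have "Z = B \<or> Z = B2" using two[OF L2(1) L2(2) L2(3) pts(4) m1(4) Z(2)] .
    ultimately show False using XB X pts(2) pts(4) AP2(3) AP2(6)[OF AO] by auto
  qed
  have par: "parallel Ls (line_of Ls X P2) (line_of Ls B B2)"
    unfolding parallel_def using L1(1) L2(1) disj by blast
  have "fin Ls l P2 B2 B = X"
    by (rule fin_eq[OF l(1) pts(4) pts(2) X L1(1) L1(2) L1(3) par])
  then show ?thesis unfolding X_def addg_def l_def P2_def by simp
qed

lemma add_indep:
  assumes OI: "Oz \<noteq> Iu" and B1l: "B1 \<notin> line_of Ls Oz Iu" and B2l: "B2 \<notin> line_of Ls Oz Iu"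
    and Al: "A \<in> line_of Ls Oz Iu" and Bl: "B \<in> line_of Ls Oz Iu"
  shows "addg Ls Oz Iu B1 A B = addg Ls Oz Iu B2 A B"
proof (cases "A = Oz")
  case True
  then show ?thesis using addg_O[OF OI B1l Bl] addg_O[OF OI B2l Bl] by simp
next
  case AO: False
  define l where "l = line_of Ls Oz Iu"
  have l: "l \<in> Ls" using frame[OF OI] l_def by auto
  define m1 where "m1 = par_through Ls B1 l"
  have m1: "m1 \<in> Ls" "B1 \<in> m1" "parallel Ls m1 l" using pt_props[OF l(1)] m1_def by auto
  show ?thesis
  proof (cases "B2 \<in> m1")
    case False
    then show ?thesis using add_indep_main[OF OI B1l B2l Al Bl AO] m1_def l_def by simp
  next
    case B2m: True
    show ?thesis
    proof (cases "\<exists>B3. B3 \<notin> l \<and> B3 \<notin> m1")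
      case True
      then obtain B3 where B3: "B3 \<notin> l" "B3 \<notin> m1" by blast
      have B3l: "B3 \<notin> line_of Ls Oz Iu" using B3 l_def by simp
      have e1: "addg Ls Oz Iu B1 A B = addg Ls Oz Iu B3 A B"
        using add_indep_main[OF OI B1l B3l Al Bl AO] B3(2) m1_def l_def by simp
      have m3: "par_through Ls B3 l \<in> Ls" "B3 \<in> par_through Ls B3 l" "parallel Ls (par_through Ls B3 l) l"
        using pt_props[OF l(1)] by auto
      have "par_through Ls B3 l \<noteq> m1" using m3(2) B3(2) by auto
      then have "B2 \<notin> par_through Ls B3 l"
        using par_disj[OF par_trans[OF m1(3) par_sym[OF m3(3)]]] B2m by blast
      then have e2: "addg Ls Oz Iu B3 A B = addg Ls Oz Iu B2 A B"
        using add_indep_main[OF OI B3l B2l Al Bl AO] l_def by simp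
      show ?thesis using e1 e2 by simp
    next
      case False
      then have "\<And>Z. Z \<in> line_of Ls Oz Iu \<or> Z \<in> par_through Ls B1 (line_of Ls Oz Iu)"
        using l_def m1_def by blast
      then show ?thesis using add_degen[OF OI B1l B2l Al Bl AO] B2m m1_def l_def by simp
    qed
  qed
qed

lemma mul_indep_main:
  assumes OI: "Oz \<noteq> Iu" and B1l: "B1 \<notin> line_of Ls Oz Iu" and B2l: "B2 \<notin> line_of Ls Oz Iu"
    and Al: "A \<in> line_of Ls Oz Iu" and Bl: "B \<in> line_of Ls Oz Iu" and AO: "A \<noteq> Oz"
    and AI: "A \<noteq> Iu" and BO: "B \<noteq> Oz" and B2o: "B2 \<notin> line_of Ls Oz B1"
  shows "mulg Ls Oz Iu B1 A B = mulg Ls Oz Iu B2 A B"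
proof -
  define l where "l = line_of Ls Oz Iu"
  have l: "l \<in> Ls" "Oz \<in> l" "Iu \<in> l" using frame[OF OI] l_def by auto
  have pts: "B1 \<notin> l" "B2 \<notin> l" "A \<in> l" "B \<in> l" using assms l_def by auto
  note LO1 = line_off[OF l(1) l(2) pts(1)]
  note LO2 = line_off[OF l(1) l(2) pts(2)]
  note LI1 = line_off[OF l(1) l(3) pts(1)]
  note LI2 = line_off[OF l(1) l(3) pts(2)]
  define o1 where "o1 = line_of Ls Oz B1"
  define o2 where "o2 = line_of Ls Oz B2"
  define q1 where "q1 = par_through Ls A (line_of Ls Iu B1)"
  define q2 where "q2 = par_through Ls A (line_of Ls Iu B2)"
  have q1: "q1 \<in> Ls" "A \<in> q1" "parallel Ls q1 (line_of Ls Iu B1)" using pt_props[OF LI1(1)] q1_def by auto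
  have q2: "q2 \<in> Ls" "A \<in> q2" "parallel Ls q2 (line_of Ls Iu B2)" using pt_props[OF LI2(1)] q2_def by auto
  define P1 where "P1 = mulP Ls Oz Iu B1 A"
  define P2 where "P2 = mulP Ls Oz Iu B2 A"
  note MP1 = mulP_props[OF OI B1l Al, folded l_def P1_def q1_def o1_def]
  note MP2 = mulP_props[OF OI B2l Al, folded l_def P2_def q2_def o2_def]
  have P1: "P1 \<in> q1" "P1 \<in> o1" "P1 \<notin> l" "P1 \<noteq> B1" using MP1(1,2) MP1(6)[OF AO] MP1(7)[OF AI] by auto
  have P2: "P2 \<in> q2" "P2 \<in> o2" "P2 \<notin> l" "P2 \<noteq> B2" using MP2(1,2) MP2(6)[OF AO] MP2(7)[OF AI] by auto
  have o1: "o1 \<in> Ls" "Oz \<in> o1" "B1 \<in> o1" "o1 \<noteq> l" using LO1 o1_def by auto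
  have o2: "o2 \<in> Ls" "Oz \<in> o2" "B2 \<in> o2" "o2 \<noteq> l" using LO2 o2_def by auto
  have P1O: "P1 \<noteq> Oz" using P1(3) l(2) by auto
  have AnLI1: "A \<notin> line_of Ls Iu B1" using line_off_meet[OF l(1) l(3) pts(1) pts(3)] AI by blast
  have AnLI2: "A \<notin> line_of Ls Iu B2" using line_off_meet[OF l(1) l(3) pts(2) pts(3)] AI by blast
  have AP1ne: "A \<noteq> P1" using P1(3) pts(3) by blast
  have AP2ne: "A \<noteq> P2" using P2(3) pts(3) by blast
  have eAP1: "line_of Ls A P1 = q1" by (rule line_eq[OF q1(1) q1(2) P1(1) AP1ne])
  have eAP2: "line_of Ls A P2 = q2" by (rule line_eq[OF q2(1) q2(2) P2(1) AP2ne])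
  have eB1P1: "line_of Ls B1 P1 = o1" by (rule line_eq[OF o1(1) o1(3) P1(2) P1(4)[symmetric]])
  have eB2P2: "line_of Ls B2 P2 = o2" by (rule line_eq[OF o2(1) o2(3) P2(2) P2(4)[symmetric]])
  have eIA: "line_of Ls Iu A = l" by (rule line_eq[OF l(1) l(3) pts(3) AI[symmetric]])
  have B2o1: "B2 \<notin> o1" using B2o o1_def by simp
  have o12: "o1 \<noteq> o2" using B2o1 o2(3) by auto
  have P12: "P1 \<noteq> P2"
  proof
    assume "P1 = P2"
    then have "P1 \<in> o2" using P2(2) by simp
    then show False using two_pts[OF o1(1) o2(1) P1(2) _ o1(2) o2(2) P1O] o12 by blast
  qed
  have B12: "B1 \<noteq> B2" using o1(3) B2o1 by auto
  have IB: "Iu \<noteq> B1" "Iu \<noteq> B2" using l(3) pts(1,2) by auto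
  have q1LI1: "line_of Ls Iu B1 \<noteq> q1" using q1(2) AnLI1 by auto
  have q2LI2: "line_of Ls Iu B2 \<noteq> q2" using q2(2) AnLI2 by auto
  have D1: "parallel Ls (line_of Ls B1 B2) (line_of Ls P1 P2)"
  proof (rule desarg_conc[of B1 P1 Iu A B2 P2 Oz])
    show "B1 \<noteq> P1" "Iu \<noteq> A" "B2 \<noteq> P2" "B1 \<noteq> Iu" "Iu \<noteq> B2" "P1 \<noteq> A" "A \<noteq> P2" "B1 \<noteq> B2" "P1 \<noteq> P2"
      using P1(4) AI P2(4) IB AP1ne AP2ne B12 P12 by auto
    show "line_of Ls B1 P1 \<noteq> line_of Ls Iu A" "line_of Ls Iu A \<noteq> line_of Ls B2 P2"
      "line_of Ls B1 P1 \<noteq> line_of Ls B2 P2"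
      unfolding eB1P1 eB2P2 eIA using o1(4) o2(4) o12 by auto
    show "Oz \<in> line_of Ls B1 P1" "Oz \<in> line_of Ls Iu A" "Oz \<in> line_of Ls B2 P2"
      unfolding eB1P1 eB2P2 eIA using o1(2) o2(2) l(2) by auto
    show "parallel Ls (line_of Ls B1 Iu) (line_of Ls P1 A)" "parallel Ls (line_of Ls Iu B2) (line_of Ls A P2)"
      "line_of Ls B1 Iu \<noteq> line_of Ls P1 A" "line_of Ls Iu B2 \<noteq> line_of Ls A P2"
      unfolding line_of_comm[of B1 Iu] line_of_comm[of P1 A] eAP1 eAP2
      using par_sym[OF q1(3)] par_sym[OF q2(3)] q1LI1 q2LI2 by auto
  qed
  define X where "X = fin Ls l P1 B1 B"
  have X: "X \<in> l" "X \<in> par_through Ls P1 (line_of Ls B B1)"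
    using fin_props[OF l(1) pts(4) pts(1), of P1] X_def by auto
  note LB1 = line_off[OF l(1) pts(4) pts(1)]
  define k1 where "k1 = par_through Ls P1 (line_of Ls B B1)"
  have k1: "k1 \<in> Ls" "P1 \<in> k1" "parallel Ls k1 (line_of Ls B B1)" "X \<in> k1"
    using pt_props[OF LB1(1)] k1_def X by auto
  have Bo1: "B \<notin> o1" using line_off_meet[OF l(1) l(2) pts(1) pts(4)] BO o1_def by blast
  have BX: "B \<noteq> X"
  proof
    assume "B = X"
    then have "fin Ls l P1 B1 B = B" using X_def by simp
    then have "P1 \<in> line_of Ls B B1" using fin_XB[OF l(1) pts(4) pts(1)] by blast
    moreover have "line_of Ls B B1 \<noteq> o1" using LB1(2) Bo1 by auto
    ultimately show False using two_pts[OF LB1(1) o1(1) _ P1(2) LB1(3) o1(3) P1(4)] by blast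
  qed
  have XP1: "X \<noteq> P1" using X(1) P1(3) by auto
  have XP2: "X \<noteq> P2" using X(1) P2(3) by auto
  have eXP1: "line_of Ls X P1 = k1" by (rule line_eq[OF k1(1) k1(4) k1(2) XP1])
  have eBX: "line_of Ls B X = l" by (rule line_eq[OF l(1) pts(4) X(1) BX])
  have BB1: "B \<noteq> B1" "B \<noteq> B2" using pts by auto
  have ne16: "line_of Ls B B1 \<noteq> line_of Ls X P1"
  proof
    assume "line_of Ls B B1 = line_of Ls X P1"
    then have "X \<in> line_of Ls B B1" using line_props(2)[OF XP1] by simp
    then show False using line_off_meet[OF l(1) pts(4) pts(1) X(1)] BX by simp
  qed
  have ne17: "line_of Ls B1 B2 \<noteq> line_of Ls P1 P2"
  proof
    assume "line_of Ls B1 B2 = line_of Ls P1 P2"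
    then have "P1 \<in> line_of Ls B1 B2" using line_props(2)[OF P12] by simp
    moreover have "line_of Ls B1 B2 \<noteq> o1" using line_props(3)[OF B12] B2o1 by auto
    ultimately show False
      using two_pts[OF line_props(1)[OF B12] o1(1) _ P1(2) line_props(2)[OF B12] o1(3) P1(4)] by blast
  qed
  have D2: "parallel Ls (line_of Ls B B2) (line_of Ls X P2)"
  proof (rule desarg_conc[of B X B1 P1 B2 P2 Oz])
    show "B \<noteq> X" "B1 \<noteq> P1" "B2 \<noteq> P2" "B \<noteq> B1" "B1 \<noteq> B2" "X \<noteq> P1" "P1 \<noteq> P2" "B \<noteq> B2" "X \<noteq> P2"
      using BX P1(4) P2(4) BB1 B12 XP1 P12 XP2 by auto
    show "line_of Ls B X \<noteq> line_of Ls B1 P1" "line_of Ls B1 P1 \<noteq> line_of Ls B2 P2"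
      "line_of Ls B X \<noteq> line_of Ls B2 P2"
      unfolding eB1P1 eB2P2 eBX using o1(4) o2(4) o12 by auto
    show "Oz \<in> line_of Ls B X" "Oz \<in> line_of Ls B1 P1" "Oz \<in> line_of Ls B2 P2"
      unfolding eB1P1 eB2P2 eBX using o1(2) o2(2) l(2) by auto
    show "parallel Ls (line_of Ls B B1) (line_of Ls X P1)"
      unfolding eXP1 using par_sym[OF k1(3)] .
    show "parallel Ls (line_of Ls B1 B2) (line_of Ls P1 P2)" by (rule D1)
    show "line_of Ls B B1 \<noteq> line_of Ls X P1" by (rule ne16)
    show "line_of Ls B1 B2 \<noteq> line_of Ls P1 P2" by (rule ne17)
  qed
  note LXP2 = line_props[OF XP2]
  have "fin Ls l P2 B2 B = X"
    by (rule fin_eq[OF l(1) pts(4) pts(2) X(1) LXP2(1) LXP2(2) LXP2(3) par_sym[OF D2]])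
  then show ?thesis unfolding mulg_def l_def[symmetric] P1_def[symmetric] P2_def[symmetric] X_def by simp
qed

lemma mul_indep:
  assumes OI: "Oz \<noteq> Iu" and B1l: "B1 \<notin> line_of Ls Oz Iu" and B2l: "B2 \<notin> line_of Ls Oz Iu"
    and Al: "A \<in> line_of Ls Oz Iu" and Bl: "B \<in> line_of Ls Oz Iu"
  shows "mulg Ls Oz Iu B1 A B = mulg Ls Oz Iu B2 A B"
proof -
  consider "A = Oz" | "A = Iu" | "B = Oz" | "A \<noteq> Oz" "A \<noteq> Iu" "B \<noteq> Oz" by blast
  then show ?thesis
  proof cases
    case 1 then show ?thesis using mulg_O1[OF OI B1l Bl] mulg_O1[OF OI B2l Bl] by simp
  next
    case 2 then show ?thesis using mulg_I[OF OI B1l Bl] mulg_I[OF OI B2l Bl] by simp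
  next
    case 3 then show ?thesis using mulg_O2[OF OI B1l Al] mulg_O2[OF OI B2l Al] by simp
  next
    case 4
    note AO = 4(1) and AI = 4(2) and BO = 4(3)
    define l where "l = line_of Ls Oz Iu"
    have l: "l \<in> Ls" "Oz \<in> l" "Iu \<in> l" using frame[OF OI] l_def by auto
    have pts: "B1 \<notin> l" "B2 \<notin> l" using assms l_def by auto
    note LO1 = line_off[OF l(1) l(2) pts(1)]
    show ?thesis
    proof (cases "B2 \<in> line_of Ls Oz B1")
      case False
      then show ?thesis using mul_indep_main[OF OI B1l B2l Al Bl AO AI BO] by simp
    next
      case B2o: True
      define r where "r = par_through Ls Iu (line_of Ls Oz B1)"
      have r: "r \<in> Ls" "Iu \<in> r" "parallel Ls r (line_of Ls Oz B1)" using pt_props[OF LO1(1)] r_def by auto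
      obtain Q1 Q2 where Q: "Q1 \<noteq> Q2" "Q1 \<in> r" "Q2 \<in> r" using ax1[OF r(1)] by blast
      obtain B3 where B3: "B3 \<in> r" "B3 \<noteq> Iu" using Q by blast
      have rl: "r \<noteq> l" using r(3) LO1(5) by auto
      have IO1: "Iu \<notin> line_of Ls Oz B1" using line_off_meet[OF l(1) l(2) pts(1) l(3)] OI by blast
      have rO: "r \<noteq> line_of Ls Oz B1" using r(2) IO1 by auto
      have B3l: "B3 \<notin> l" using two_pts[OF r(1) l(1) r(2) l(3) B3(1)] B3(2) rl by blast
      have B3o: "B3 \<notin> line_of Ls Oz B1" using par_disj[OF r(3) rO B3(1)] .
      have B3l': "B3 \<notin> line_of Ls Oz Iu" using B3l l_def by simp
      have e1: "mulg Ls Oz Iu B1 A B = mulg Ls Oz Iu B3 A B"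
        by (rule mul_indep_main[OF OI B1l B3l' Al Bl AO AI BO B3o])
      note LO3 = line_off[OF l(1) l(2) B3l]
      have o13: "line_of Ls Oz B3 \<noteq> line_of Ls Oz B1" using LO3(3) B3o by auto
      have B2O: "B2 \<noteq> Oz" using pts(2) l(2) by auto
      have "B2 \<notin> line_of Ls Oz B3"
        using two_pts[OF LO3(1) LO1(1) _ B2o LO3(2) LO1(2) B2O] o13 by blast
      then have e2: "mulg Ls Oz Iu B3 A B = mulg Ls Oz Iu B2 A B"
        by (rule mul_indep_main[OF OI B3l' B2l Al Bl AO AI BO])
      show ?thesis using e1 e2 by simp
    qed
  qed
qed

lemma aux_off: assumes "Oz \<noteq> Iu" shows "aux_pt Ls Oz Iu \<notin> line_of Ls Oz Iu"
proof -
  have "\<exists>P. P \<notin> line_of Ls Oz Iu" using off_line frame[OF assms] by blast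
  then show ?thesis unfolding aux_pt_def by (rule someI_ex)
qed

lemma sf_add_in:
  assumes "Oz \<noteq> Iu" "A \<in> line_of Ls Oz Iu" "B \<in> line_of Ls Oz Iu"
  shows "sf_add Ls Oz Iu A B \<in> line_of Ls Oz Iu"
  unfolding sf_add_g addg_def
  using fin_props(1)[OF conjunct1[OF frame[OF assms(1)]] assms(3) aux_off[OF assms(1)]] .

lemma sf_mul_in:
  assumes "Oz \<noteq> Iu" "A \<in> line_of Ls Oz Iu" "B \<in> line_of Ls Oz Iu"
  shows "sf_mul Ls Oz Iu A B \<in> line_of Ls Oz Iu"
  unfolding sf_mul_g mulg_def
  using fin_props(1)[OF conjunct1[OF frame[OF assms(1)]] assms(3) aux_off[OF assms(1)]] .

lemma fin_ex1:
  assumes "l \<in> Ls" "B1 \<notin> l" "P \<notin> l" "T \<in> l"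
  shows "\<exists>!Y. Y \<in> l \<and> fin Ls l P B1 Y = T"
proof -
  obtain Y where "Y \<in> l" "fin Ls l P B1 Y = T" using fin_surj[OF assms] by blast
  then show ?thesis
    using fin_inj[OF assms(1) _ _ assms(2) assms(3)] by blast
qed

lemma neg_ex1:
  assumes "Oz \<noteq> Iu" "X \<in> line_of Ls Oz Iu"
  shows "\<exists>!Y. Y \<in> line_of Ls Oz Iu \<and> sf_add Ls Oz Iu X Y = Oz"
  unfolding sf_add_g addg_def
  by (rule fin_ex1[OF conjunct1[OF frame[OF assms(1)]] aux_off[OF assms(1)]
        addP_props(3)[OF assms(1) aux_off[OF assms(1)] assms(2)] conjunct1[OF conjunct2[OF frame[OF assms(1)]]]])

lemma inv_ex1:
  assumes "Oz \<noteq> Iu" "X \<in> line_of Ls Oz Iu" "X \<noteq> Oz"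
  shows "\<exists>!Y. Y \<in> line_of Ls Oz Iu \<and> sf_mul Ls Oz Iu X Y = Iu"
  unfolding sf_mul_g mulg_def
  by (rule fin_ex1[OF conjunct1[OF frame[OF assms(1)]] aux_off[OF assms(1)]
        mulP_props(6)[OF assms(1) aux_off[OF assms(1)] assms(2) assms(3)] conjunct2[OF conjunct2[OF frame[OF assms(1)]]]])

lemma neg_props:
  assumes "Oz \<noteq> Iu" "X \<in> line_of Ls Oz Iu"
  shows "sf_neg Ls Oz Iu X \<in> line_of Ls Oz Iu" "sf_add Ls Oz Iu X (sf_neg Ls Oz Iu X) = Oz"
  using theI'[OF neg_ex1[OF assms]] unfolding sf_neg_def by auto

lemma inv_props:
  assumes "Oz \<noteq> Iu" "X \<in> line_of Ls Oz Iu" "X \<noteq> Oz"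
  shows "sf_inv Ls Oz Iu X \<in> line_of Ls Oz Iu" "sf_mul Ls Oz Iu X (sf_inv Ls Oz Iu X) = Iu"
  using theI'[OF inv_ex1[OF assms]] unfolding sf_inv_def by auto

lemma sub_in:
  assumes "Oz \<noteq> Iu" "A \<in> line_of Ls Oz Iu" "B \<in> line_of Ls Oz Iu"
  shows "sf_sub Ls Oz Iu A B \<in> line_of Ls Oz Iu"
  unfolding sf_sub_def using sf_add_in[OF assms(1,2) neg_props(1)[OF assms(1,3)]] .

lemma add_inj1:
  assumes OI: "Oz \<noteq> Iu" and Al: "A \<in> line_of Ls Oz Iu" and A'l: "A' \<in> line_of Ls Oz Iu"
    and Yl: "Y \<in> line_of Ls Oz Iu" and e: "sf_add Ls Oz Iu A Y = sf_add Ls Oz Iu A' Y"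
  shows "A = A'"
proof -
  define l where "l = line_of Ls Oz Iu"
  have l: "l \<in> Ls" "Oz \<in> l" "Iu \<in> l" using frame[OF OI] l_def by auto
  define B1 where "B1 = aux_pt Ls Oz Iu"
  have B1l: "B1 \<notin> line_of Ls Oz Iu" using aux_off[OF OI] B1_def by simp
  have B1: "B1 \<notin> l" "Y \<in> l" using B1l Yl l_def by auto
  define m1 where "m1 = par_through Ls B1 l"
  have m1: "m1 \<in> Ls" "parallel Ls m1 l" using pt_props[OF l(1)] m1_def by auto
  note LY = line_off[OF l(1) B1(2) B1(1)]
  have np: "\<not> parallel Ls m1 (line_of Ls Y B1)"
  proof
    assume "parallel Ls m1 (line_of Ls Y B1)"
    then show False using par_trans[OF par_sym[OF m1(2)]] LY(5) by blast
  qed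
  have "fin Ls l (addP Ls Oz Iu B1 A) B1 Y = fin Ls l (addP Ls Oz Iu B1 A') B1 Y"
    using e unfolding sf_add_g addg_def l_def B1_def .
  then have "addP Ls Oz Iu B1 A = addP Ls Oz Iu B1 A'"
    using fin_injP[OF l(1) B1(2) B1(1) m1(1) _ _ np] addP_props(1)[OF OI B1l Al] addP_props(1)[OF OI B1l A'l]
    unfolding m1_def l_def by blast
  then show ?thesis using addP_inj[OF OI B1l Al A'l] by blast
qed

lemma sub_ne:
  assumes "Oz \<noteq> Iu" "B \<in> line_of Ls Oz Iu" "C \<in> line_of Ls Oz Iu" "B \<noteq> C"
  shows "sf_sub Ls Oz Iu B C \<noteq> Oz"
proof
  assume "sf_sub Ls Oz Iu B C = Oz"
  then have "sf_add Ls Oz Iu B (sf_neg Ls Oz Iu C) = sf_add Ls Oz Iu C (sf_neg Ls Oz Iu C)"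
    using neg_props(2)[OF assms(1,3)] unfolding sf_sub_def by simp
  then have "B = C" using add_inj1[OF assms(1,2,3) neg_props(1)[OF assms(1,3)]] by blast
  then show False using assms(4) by simp
qed

end

locale dil = dap +
  fixes d :: "'p \<Rightarrow> 'p"
  assumes dil: "dilatation Ls d"
begin

lemma inj_d: "inj d"
  using dil unfolding dilatation_def collineation_def bij_def by blast

lemma img_Ls: "l \<in> Ls \<Longrightarrow> d ` l \<in> Ls"
  using dil unfolding dilatation_def collineation_def by blast

lemma dpar: "P \<noteq> Q \<Longrightarrow> parallel Ls (line_of Ls (d P) (d Q)) (line_of Ls P Q)"
  using dil unfolding dilatation_def by blast

lemma mem_img: "d X \<in> d ` l \<longleftrightarrow> X \<in> l"
  using inj_d by (simp add: inj_image_mem_iff)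

lemma line_img:
  assumes "P \<noteq> Q" shows "d ` (line_of Ls P Q) = line_of Ls (d P) (d Q)"
proof -
  note L = line_props[OF assms]
  have "d P \<noteq> d Q" using inj_d assms by (simp add: inj_eq)
  then show ?thesis using line_eq[OF img_Ls[OF L(1)] imageI[OF L(2)] imageI[OF L(3)]] by simp
qed

lemma par_self: assumes "l \<in> Ls" shows "parallel Ls (d ` l) l"
proof -
  obtain P Q where PQ: "P \<noteq> Q" "P \<in> l" "Q \<in> l" using ax1[OF assms] by blast
  have e: "line_of Ls P Q = l" using line_eq[OF assms PQ(2,3,1)] .
  show ?thesis using dpar[OF PQ(1)] line_img[OF PQ(1)] unfolding e by simp
qed

lemma par_img: "parallel Ls l m \<Longrightarrow> parallel Ls (d ` l) (d ` m)"
  using par_trans[OF par_self[OF par_Ls(1)] par_trans[OF _ par_sym[OF par_self[OF par_Ls(2)]]]] by blast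

lemma npar_img:
  assumes "l \<in> Ls" "m \<in> Ls" "\<not> parallel Ls l m" shows "\<not> parallel Ls (d ` l) (d ` m)"
proof
  assume "parallel Ls (d ` l) (d ` m)"
  then have "parallel Ls l m"
    using par_trans[OF par_sym[OF par_self[OF assms(1)]] par_trans[OF _ par_self[OF assms(2)]]] by blast
  then show False using assms(3) by simp
qed

lemma pt_img:
  assumes "l \<in> Ls" shows "d ` (par_through Ls P l) = par_through Ls (d P) (d ` l)"
  using pt_eq[OF img_Ls[OF assms] img_Ls[OF pt_props(1)[OF assms]] imageI[OF pt_props(2)[OF assms]]
      par_img[OF pt_props(3)[OF assms]]] by simp

lemma meet_img:
  assumes "l \<in> Ls" "m \<in> Ls" "\<not> parallel Ls l m" shows "d (meet l m) = meet (d ` l) (d ` m)"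
proof -
  note M = nonpar_meet[OF assms]
  have "d ` l \<noteq> d ` m" using npar_img[OF assms] par_refl[OF img_Ls[OF assms(1)]] by auto
  then show ?thesis using meet_eq[OF img_Ls[OF assms(1)] img_Ls[OF assms(2)] _ imageI[OF M(1)] imageI[OF M(2)]]
    by simp
qed

lemma frame_img:
  assumes "Oz \<noteq> Iu"
  shows "d Oz \<noteq> d Iu" "d ` (line_of Ls Oz Iu) = line_of Ls (d Oz) (d Iu)"
  using inj_d assms line_img[OF assms] by (auto simp: inj_eq)

lemma fin_img:
  assumes "l \<in> Ls" "B \<in> l" "B1 \<notin> l"
  shows "d (fin Ls l P B1 B) = fin Ls (d ` l) (d P) (d B1) (d B)"
proof -
  note L = line_off[OF assms]
  have ne: "B \<noteq> B1" using assms by auto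
  show ?thesis unfolding fin_def
    using meet_img[OF assms(1) pt_props(1)[OF L(1)] fin_props(3)[OF assms]]
    unfolding pt_img[OF L(1)] line_img[OF ne] .
qed

lemma addg_img:
  assumes OI: "Oz \<noteq> Iu" and B1l: "B1 \<notin> line_of Ls Oz Iu" and Al: "A \<in> line_of Ls Oz Iu"
    and Bl: "B \<in> line_of Ls Oz Iu"
  shows "d (addg Ls Oz Iu B1 A B) = addg Ls (d Oz) (d Iu) (d B1) (d A) (d B)"
proof -
  have l: "line_of Ls Oz Iu \<in> Ls" "Oz \<in> line_of Ls Oz Iu" using frame[OF OI] by auto
  note LO = line_off[OF l(1) l(2) B1l]
  have ne: "Oz \<noteq> B1" using l(2) B1l by auto
  have "d (addP Ls Oz Iu B1 A) = addP Ls (d Oz) (d Iu) (d B1) (d A)"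
    unfolding addP_def
    using meet_img[OF pt_props(1)[OF l(1)] pt_props(1)[OF LO(1)] addP_props(4)[OF OI B1l Al]]
    unfolding pt_img[OF l(1)] pt_img[OF LO(1)] line_img[OF OI] line_img[OF ne] .
  then show ?thesis unfolding addg_def fin_img[OF l(1) Bl B1l] frame_img(2)[OF OI] by simp
qed

lemma mulg_img:
  assumes OI: "Oz \<noteq> Iu" and B1l: "B1 \<notin> line_of Ls Oz Iu" and Al: "A \<in> line_of Ls Oz Iu"
    and Bl: "B \<in> line_of Ls Oz Iu"
  shows "d (mulg Ls Oz Iu B1 A B) = mulg Ls (d Oz) (d Iu) (d B1) (d A) (d B)"
proof -
  have l: "line_of Ls Oz Iu \<in> Ls" "Oz \<in> line_of Ls Oz Iu" "Iu \<in> line_of Ls Oz Iu" using frame[OF OI] by auto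
  note LO = line_off[OF l(1) l(2) B1l]
  note LI = line_off[OF l(1) l(3) B1l]
  have ne: "Oz \<noteq> B1" "Iu \<noteq> B1" using l(2,3) B1l by auto
  have "d (mulP Ls Oz Iu B1 A) = mulP Ls (d Oz) (d Iu) (d B1) (d A)"
    unfolding mulP_def
    using meet_img[OF pt_props(1)[OF LI(1)] LO(1) mulP_props(3)[OF OI B1l Al]]
    unfolding pt_img[OF LI(1)] line_img[OF ne(1)] line_img[OF ne(2)] .
  then show ?thesis unfolding mulg_def fin_img[OF l(1) Bl B1l] frame_img(2)[OF OI] by simp
qed

lemma add_img:
  assumes OI: "Oz \<noteq> Iu" and Al: "A \<in> line_of Ls Oz Iu" and Bl: "B \<in> line_of Ls Oz Iu"
  shows "d (sf_add Ls Oz Iu A B) = sf_add Ls (d Oz) (d Iu) (d A) (d B)"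
proof -
  note F = frame_img[OF OI]
  have a: "aux_pt Ls Oz Iu \<notin> line_of Ls Oz Iu" by (rule aux_off[OF OI])
  have a': "d (aux_pt Ls Oz Iu) \<notin> line_of Ls (d Oz) (d Iu)" using a mem_img F(2) by metis
  have A': "d A \<in> line_of Ls (d Oz) (d Iu)" "d B \<in> line_of Ls (d Oz) (d Iu)"
    using Al Bl mem_img F(2) by metis+
  show ?thesis unfolding sf_add_g addg_img[OF OI a Al Bl]
    using add_indep[OF F(1) a' aux_off[OF F(1)] A'] .
qed

lemma mul_img:
  assumes OI: "Oz \<noteq> Iu" and Al: "A \<in> line_of Ls Oz Iu" and Bl: "B \<in> line_of Ls Oz Iu"
  shows "d (sf_mul Ls Oz Iu A B) = sf_mul Ls (d Oz) (d Iu) (d A) (d B)"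
proof -
  note F = frame_img[OF OI]
  have a: "aux_pt Ls Oz Iu \<notin> line_of Ls Oz Iu" by (rule aux_off[OF OI])
  have a': "d (aux_pt Ls Oz Iu) \<notin> line_of Ls (d Oz) (d Iu)" using a mem_img F(2) by metis
  have A': "d A \<in> line_of Ls (d Oz) (d Iu)" "d B \<in> line_of Ls (d Oz) (d Iu)"
    using Al Bl mem_img F(2) by metis+
  show ?thesis unfolding sf_mul_g mulg_img[OF OI a Al Bl]
    using mul_indep[OF F(1) a' aux_off[OF F(1)] A'] .
qed

lemma neg_img:
  assumes OI: "Oz \<noteq> Iu" and Xl: "X \<in> line_of Ls Oz Iu"
  shows "d (sf_neg Ls Oz Iu X) = sf_neg Ls (d Oz) (d Iu) (d X)"
proof -
  note F = frame_img[OF OI]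
  note N = neg_props[OF OI Xl]
  have X': "d X \<in> line_of Ls (d Oz) (d Iu)" using Xl mem_img F(2) by metis
  have N1: "d (sf_neg Ls Oz Iu X) \<in> line_of Ls (d Oz) (d Iu)" using N(1) mem_img F(2) by metis
  have N2: "sf_add Ls (d Oz) (d Iu) (d X) (d (sf_neg Ls Oz Iu X)) = d Oz"
    using add_img[OF OI Xl N(1)] N(2) by simp
  show ?thesis using N1 N2 unfolding sf_neg_def
    by (intro the1_equality[OF neg_ex1[OF F(1) X'], symmetric]) blast
qed

lemma inv_img:
  assumes OI: "Oz \<noteq> Iu" and Xl: "X \<in> line_of Ls Oz Iu" and XO: "X \<noteq> Oz"
  shows "d (sf_inv Ls Oz Iu X) = sf_inv Ls (d Oz) (d Iu) (d X)"
proof -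
  note F = frame_img[OF OI]
  note N = inv_props[OF OI Xl XO]
  have X': "d X \<in> line_of Ls (d Oz) (d Iu)" using Xl mem_img F(2) by metis
  have XO': "d X \<noteq> d Oz" using XO inj_d by (simp add: inj_eq)
  have N1: "d (sf_inv Ls Oz Iu X) \<in> line_of Ls (d Oz) (d Iu)" using N(1) mem_img F(2) by metis
  have N2: "sf_mul Ls (d Oz) (d Iu) (d X) (d (sf_inv Ls Oz Iu X)) = d Iu"
    using mul_img[OF OI Xl N(1)] N(2) by simp
  show ?thesis using N1 N2 unfolding sf_inv_def
    by (intro the1_equality[OF inv_ex1[OF F(1) X' XO'], symmetric]) blast
qed

lemma sub_img:
  assumes OI: "Oz \<noteq> Iu" and Al: "A \<in> line_of Ls Oz Iu" and Bl: "B \<in> line_of Ls Oz Iu"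
  shows "d (sf_sub Ls Oz Iu A B) = sf_sub Ls (d Oz) (d Iu) (d A) (d B)"
  unfolding sf_sub_def add_img[OF OI Al neg_props(1)[OF OI Bl]] neg_img[OF OI Bl] ..

lemma ratio_img:
  assumes OI: "Oz \<noteq> Iu" and Al: "A \<in> line_of Ls Oz Iu" and Bl: "B \<in> line_of Ls Oz Iu"
    and Cl: "C \<in> line_of Ls Oz Iu" and BC: "B \<noteq> C"
  shows "d (ratio Ls Oz Iu A B C) = ratio Ls (d Oz) (d Iu) (d A) (d B) (d C)"
proof -
  have W: "sf_sub Ls Oz Iu B C \<in> line_of Ls Oz Iu" "sf_sub Ls Oz Iu B C \<noteq> Oz"
    using sub_in[OF OI Bl Cl] sub_ne[OF OI Bl Cl BC] by auto
  have V: "sf_sub Ls Oz Iu A C \<in> line_of Ls Oz Iu" using sub_in[OF OI Al Cl] .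
  have I: "sf_inv Ls Oz Iu (sf_sub Ls Oz Iu B C) \<in> line_of Ls Oz Iu" using inv_props(1)[OF OI W] .
  show ?thesis unfolding ratio_def mul_img[OF OI I V] inv_img[OF OI W] sub_img[OF OI Bl Cl] sub_img[OF OI Al Cl] ..
qed

end

theorem mainTheorem13:
  fixes Ls :: "'p set set" and Oz Iu A B C :: 'p and \<delta> :: "'p \<Rightarrow> 'p"
  assumes "desargues_affine_plane Ls"
    and "Oz \<noteq> Iu"
    and "dilatation Ls \<delta>"
    and "A \<in> line_of Ls Oz Iu" and "B \<in> line_of Ls Oz Iu" and "C \<in> line_of Ls Oz Iu"
    and "B \<noteq> C"
  shows "\<delta> (ratio Ls Oz Iu A B C) = ratio Ls (\<delta> Oz) (\<delta> Iu) (\<delta> A) (\<delta> B) (\<delta> C)"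
proof -
  interpret dil Ls \<delta> using assms(1,3) by (unfold_locales) auto
  show ?thesis by (rule ratio_img[OF assms(2,4,5,6,7)])
qed

end
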